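(* Let $Y$ be a finite-dimensional real or complex vector space, $\mathfrak g\subset\mathfrak{gl}(Y)$ a Lie subalgebra closed under $(S,T)\mapsto U_TS:=TST$, and $\omega$ a bilinear form on $Y$ with $\omega(Tx,y)+\omega(x,Ty)=0$ for all $T\in\mathfrak g$, $x,y\in Y$. Define $F\colon Y\to\mathfrak g^*$ by $\langle F(y),T\rangle=\tfrac12\omega(Ty,y)$, let $\alpha\colon\mathfrak g^*\to\mathfrak g$ and $f(y)=\alpha(F(y))y$. Let nonzero $b_1,\dots,b_s$ and $h>0$ be given and suppose $y_0,y_1,Y_1,\dots,Y_s\in Y$ satisfy \[ Y_i = y_0 + h\sum_{j=1}^{i-1} b_j f(Y_j) + \frac h2 b_i f(Y_i),\qquad y_1 = y_0 + h\sum_{i=1}^s b_i f(Y_i). \] Then $z_0=F(y_0)$, $Z_i=F(Y_i)$, $z_1=F(y_1)$ satisfy \[ Z_i = z_0 - h\sum_{j=1}^{i-1} b_j\operatorname{ad}^*_{\alpha(Z_j)}Z_j - \frac h2 b_i\operatorname{ad}^*_{\alpha(Z_i)}Z_i + \frac{h^2}{4}b_i^2U^*_{\alpha(Z_i)}Z_i,\qquad z_1 = z_0 - h\sum_{i=1}^s b_i\operatorname{ad}^*_{\alpha(Z_i)}Z_i . \]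
   Context: $\langle\cdot,\cdot\rangle$ is the pairing between $\mathfrak g^*$ and $\mathfrak g$; the bracket is $[S,T]=ST-TS$. $\operatorname{ad}^*_Tz\in\mathfrak g^*$ is defined by $\langle\operatorname{ad}^*_Tz,S\rangle=\langle z,[T,S]\rangle$ and $U^*_Tz$ by $\langle U^*_Tz,S\rangle=\langle z,TST\rangle$ for all $S\in\mathfrak g$. *)

theory Defs
  imports "HOL-Analysis.Analysis"
begin

text \<open>Y = 'k^'n (finite-dimensional vector space over 'k, with 'k real or complex,
  generalised to any real_normed_field); gl(Y) = 'k^'n^'n.\<close>

definition mscale :: "'k::real_normed_field \<Rightarrow> 'k^'n^'n \<Rightarrow> 'k^'n^'n" where
  "mscale c A = (\<chi> i j. c * A$i$j)"

definition bracket :: "'k::real_normed_field^'n^'n \<Rightarrow> 'k^'n^'n \<Rightarrow> 'k^'n^'n" where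
  "bracket S T = S ** T - T ** S"

definition lie_subalgebra :: "('k::real_normed_field^'n^'n) set \<Rightarrow> bool" where
  "lie_subalgebra g \<longleftrightarrow> 0 \<in> g \<and> (\<forall>S\<in>g. \<forall>T\<in>g. S + T \<in> g) \<and>
     (\<forall>c. \<forall>S\<in>g. mscale c S \<in> g) \<and> (\<forall>S\<in>g. \<forall>T\<in>g. bracket S T \<in> g)"

definition bilinear_form :: "('k::real_normed_field^'n \<Rightarrow> 'k^'n \<Rightarrow> 'k) \<Rightarrow> bool" where
  "bilinear_form w \<longleftrightarrow>
     (\<forall>x x' y. w (x + x') y = w x y + w x' y) \<and> (\<forall>c x y. w (c *s x) y = c * w x y) \<and>
     (\<forall>x y y'. w x (y + y') = w x y + w x y') \<and> (\<forall>c x y. w x (c *s y) = c * w x y)"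

text \<open>The dual space g^*: linear functionals on g, represented as functions on gl(Y)
  vanishing outside g.\<close>
definition dual :: "('k::real_normed_field^'n^'n) set \<Rightarrow> ('k^'n^'n \<Rightarrow> 'k) set" where
  "dual g = {z. (\<forall>S\<in>g. \<forall>T\<in>g. z (S + T) = z S + z T) \<and> (\<forall>c. \<forall>S\<in>g. z (mscale c S) = c * z S)
               \<and> (\<forall>S. S \<notin> g \<longrightarrow> z S = 0)}"

definition momap :: "('k::real_normed_field^'n^'n) set \<Rightarrow> ('k^'n \<Rightarrow> 'k^'n \<Rightarrow> 'k) \<Rightarrow> 'k^'n \<Rightarrow> ('k^'n^'n \<Rightarrow> 'k)" where
  "momap g w y = (\<lambda>T. if T \<in> g then w (T *v y) y / 2 else 0)"

definition ad_star :: "('k::real_normed_field^'n^'n) set \<Rightarrow> 'k^'n^'n \<Rightarrow> ('k^'n^'n \<Rightarrow> 'k) \<Rightarrow> ('k^'n^'n \<Rightarrow> 'k)" where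
  "ad_star g T z = (\<lambda>S. if S \<in> g then z (bracket T S) else 0)"

definition U_star :: "('k::real_normed_field^'n^'n) set \<Rightarrow> 'k^'n^'n \<Rightarrow> ('k^'n^'n \<Rightarrow> 'k) \<Rightarrow> ('k^'n^'n \<Rightarrow> 'k)" where
  "U_star g T z = (\<lambda>S. if S \<in> g then z (T ** S ** T) else 0)"

end

theory Submission
  imports Defs
begin

lemma bil_diff:
  assumes "bilinear_form w"
  shows "w (x - x') y = w x y - w x' y"
proof -
  have "w (x - x' + x') y = w (x - x') y + w x' y"
    using assms unfolding bilinear_form_def by blast
  then show ?thesis by simp
qed

lemma Qexp:
  fixes w :: "'k::real_normed_field^'n \<Rightarrow> 'k^'n \<Rightarrow> 'k"
  assumes bw: "bilinear_form w"
  shows "w (S *v (Y + c *s v)) (Y + c *s v) = w (S *v Y) Y + c * (w (S *v Y) v + w (S *v v) Y) + c^2 * w (S *v v) v"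
proof -
  have l1: "\<And>x x' y. w (x + x') y = w x y + w x' y" and l2: "\<And>c x y. w (c *s x) y = c * w x y"
   and r1: "\<And>x y y'. w x (y + y') = w x y + w x y'" and r2: "\<And>c x y. w x (c *s y) = c * w x y"
    using bw unfolding bilinear_form_def by blast+
  have "S *v (Y + c *s v) = S *v Y + c *s (S *v v)"
    by (simp add: matrix_vector_right_distrib vector_scalar_commute)
  then show ?thesis
    by (simp add: l1 l2 r1 r2 algebra_simps power2_eq_square)
qed

lemma mscale_mv:
  fixes S :: "'k::real_normed_field^'n^'n"
  shows "mscale c S *v y = c *s (S *v y)"
  by (simp add: vec_eq_iff matrix_vector_mult_def mscale_def sum_distrib_left mult.assoc)

lemma momap_dual:
  assumes bw: "bilinear_form w" and gl: "lie_subalgebra g"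
  shows "momap g w y \<in> dual g"
proof -
  have l1: "\<And>x x' y. w (x + x') y = w x y + w x' y" and l2: "\<And>c x y. w (c *s x) y = c * w x y"
    using bw unfolding bilinear_form_def by blast+
  show ?thesis
    unfolding dual_def momap_def
    using gl unfolding lie_subalgebra_def
    by (auto simp: matrix_vector_mult_add_rdistrib mscale_mv l1 l2 add_divide_distrib)
qed

lemma arith1:
  fixes M1 M0 QY K Q F0 h Sg ad c b :: "'k::real_normed_field"
  assumes "M1 = (QY + c*K + c^2*Q)/2" "M0 = (QY + (-c)*K + (-c)^2*Q)/2" "M0 = F0 - h*Sg"
    "ad = -K/2" "c = h/2*b"
  shows "M1 = F0 - h*(b*ad + Sg)"
proof -
  have F0: "F0 = M0 + h*Sg" using assms(3) by simp
  show ?thesis unfolding assms(1) F0 assms(2) assms(4) assms(5) by (simp add: field_simps power2_eq_square)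
qed

lemma arith2:
  fixes MY M0 QY K Q F0 h Sg ad c b U :: "'k::real_normed_field"
  assumes "MY = QY/2" "M0 = (QY + (-c)*K + (-c)^2*Q)/2" "M0 = F0 - h*Sg"
    "ad = -K/2" "U = -Q/2" "c = h/2*b"
  shows "MY = F0 - h*Sg - h/2*b*ad + h^2/4*b^2*U"
proof -
  have F0: "F0 = M0 + h*Sg" using assms(3) by simp
  show ?thesis unfolding assms(1) F0 assms(2) assms(4) assms(5) assms(6) by (simp add: field_simps power2_eq_square)
qed

theorem corollary3p9:
  fixes g :: "('k::real_normed_field^'n^'n) set"
    and w :: "'k^'n \<Rightarrow> 'k^'n \<Rightarrow> 'k"
    and \<alpha> :: "('k^'n^'n \<Rightarrow> 'k) \<Rightarrow> 'k^'n^'n"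
    and b :: "nat \<Rightarrow> real" and h :: real and s :: nat
    and y0 y1 :: "'k^'n" and Yv :: "nat \<Rightarrow> 'k^'n"
  assumes g_lie: "lie_subalgebra g"
    and g_U: "\<forall>S\<in>g. \<forall>T\<in>g. T ** S ** T \<in> g"
    and w_bil: "bilinear_form w"
    and w_inv: "\<forall>T\<in>g. \<forall>x y. w (T *v x) y + w x (T *v y) = 0"
    and \<alpha>_into: "\<forall>z\<in>dual g. \<alpha> z \<in> g"
    and b_nz: "\<forall>i\<in>{1..s}. b i \<noteq> 0"
    and h_pos: "h > 0"
    and stages: "\<forall>i\<in>{1..s}. Yv i = y0
        + of_real h *s (\<Sum>j\<in>{1..<i}. of_real (b j) *s (\<alpha> (momap g w (Yv j)) *v Yv j))
        + (of_real h / 2 * of_real (b i)) *s (\<alpha> (momap g w (Yv i)) *v Yv i)"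
    and update: "y1 = y0 + of_real h *s (\<Sum>i\<in>{1..s}. of_real (b i) *s (\<alpha> (momap g w (Yv i)) *v Yv i))"
  shows "(\<forall>i\<in>{1..s}. momap g w (Yv i) = (\<lambda>S. momap g w y0 S
           - of_real h * (\<Sum>j\<in>{1..<i}. of_real (b j) * ad_star g (\<alpha> (momap g w (Yv j))) (momap g w (Yv j)) S)
           - of_real h / 2 * of_real (b i) * ad_star g (\<alpha> (momap g w (Yv i))) (momap g w (Yv i)) S
           + of_real h ^ 2 / 4 * of_real (b i) ^ 2 * U_star g (\<alpha> (momap g w (Yv i))) (momap g w (Yv i)) S))
     \<and> momap g w y1 = (\<lambda>S. momap g w y0 S
           - of_real h * (\<Sum>i\<in>{1..s}. of_real (b i) * ad_star g (\<alpha> (momap g w (Yv i))) (momap g w (Yv i)) S))"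
proof -
  have l1: "\<And>x x' y. w (x + x') y = w x y + w x' y" and l2: "\<And>c x y. w (c *s x) y = c * w x y"
    using w_bil unfolding bilinear_form_def by blast+
  have winv: "w (T *v x) y = - w x (T *v y)" if "T \<in> g" for T x y
  proof -
    have "w (T *v x) y + w x (T *v y) = 0" using w_inv that by blast
    then show ?thesis by (simp add: eq_neg_iff_add_eq_0)
  qed
  define A where "A j = \<alpha> (momap g w (Yv j))" for j
  define v where "v j = A j *v Yv j" for j
  have Ag: "A j \<in> g" for j unfolding A_def using \<alpha>_into momap_dual[OF w_bil g_lie] by blast
  define X where "X i = y0 + of_real h *s (\<Sum>j\<in>{1..<i}. of_real (b j) *s v j)" for i
  define c where "c i = (of_real h / 2 * of_real (b i) :: 'k)" for i
  have YX: "Yv i = X i + c i *s v i" if "i \<in> {1..s}" for i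
    using stages that unfolding X_def c_def v_def A_def by simp
  have XS: "X (Suc i) = Yv i + c i *s v i" if "i \<in> {1..s}" for i
  proof -
    have "X (Suc i) = X i + (of_real h * of_real (b i)) *s v i"
      using that by (simp add: X_def vector_add_ldistrib add.assoc)
    also have "\<dots> = Yv i + c i *s v i"
    proof -
      have "of_real h * of_real (b i) = c i + c i" by (simp add: c_def field_simps)
      then have "(of_real h * of_real (b i)) *s v i = c i *s v i + c i *s v i"
        by (simp only: vector_sadd_rdistrib)
      then show ?thesis using YX[OF that] by (simp only: add.assoc)
    qed
    finally show ?thesis .
  qed
  have XY: "X i = Yv i + (- c i) *s v i" if "i \<in> {1..s}" for i
    by (simp add: YX[OF that] vector_smult_lneg)
  have X1: "X 1 = y0" by (simp add: X_def)
  have ys: "y1 = X (Suc s)" unfolding X_def atLeastLessThanSuc_atLeastAtMost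
    using update by (simp add: v_def A_def)
  have main: "(\<forall>i\<in>{1..s}. momap g w (Yv i) S = momap g w y0 S
           - of_real h * (\<Sum>j\<in>{1..<i}. of_real (b j) * ad_star g (A j) (momap g w (Yv j)) S)
           - of_real h / 2 * of_real (b i) * ad_star g (A i) (momap g w (Yv i)) S
           + of_real h ^ 2 / 4 * of_real (b i) ^ 2 * U_star g (A i) (momap g w (Yv i)) S)
     \<and> momap g w y1 S = momap g w y0 S
           - of_real h * (\<Sum>i\<in>{1..s}. of_real (b i) * ad_star g (A i) (momap g w (Yv i)) S)" for S
  proof (cases "S \<in> g")
    case False
    then show ?thesis by (simp add: momap_def ad_star_def U_star_def)
  next
    case Sg: True
    define q where "q x y = w (S *v x) y" for x y
    have mq: "momap g w x S = q x x / 2" for x using Sg by (simp add: momap_def q_def)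
    have ad: "ad_star g (A i) (momap g w (Yv i)) S = - (q (Yv i) (v i) + q (v i) (Yv i)) / 2" for i
    proof -
      have br: "bracket (A i) S \<in> g" using g_lie Ag Sg unfolding lie_subalgebra_def by blast
      have "w (bracket (A i) S *v Yv i) (Yv i) = - (q (Yv i) (v i) + q (v i) (Yv i))"
        unfolding bracket_def q_def v_def
        by (simp add: matrix_vector_mult_diff_rdistrib bil_diff[OF w_bil] winv[OF Ag]
                 flip: matrix_vector_mul_assoc)
      then show ?thesis using Sg br by (simp add: ad_star_def momap_def)
    qed
    have U: "U_star g (A i) (momap g w (Yv i)) S = - q (v i) (v i) / 2" for i
    proof -
      have br: "A i ** S ** A i \<in> g" using g_U Ag Sg by blast
      have "w ((A i ** S ** A i) *v Yv i) (Yv i) = - q (v i) (v i)"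
        unfolding q_def v_def
        by (simp add: winv[OF Ag] flip: matrix_vector_mul_assoc)
      then show ?thesis using Sg br by (simp add: U_star_def momap_def)
    qed
    have qe: "q (Y + d *s u) (Y + d *s u) = q Y Y + d * (q Y u + q u Y) + d^2 * q u u" for Y d u
      unfolding q_def by (rule Qexp[OF w_bil])
    have clm: "n \<le> s \<longrightarrow> momap g w (X (Suc n)) S = momap g w y0 S
           - of_real h * (\<Sum>j\<in>{1..<Suc n}. of_real (b j) * ad_star g (A j) (momap g w (Yv j)) S)" for n
    proof (induction n)
      case 0
      then show ?case using X1 by simp
    next
      case (Suc n)
      show ?case
      proof
        assume le: "Suc n \<le> s"
        let ?i = "Suc n"
        have i: "?i \<in> {1..s}" using le by simp
        have e1: "momap g w (X (Suc ?i)) S = (q (Yv ?i) (Yv ?i) + c ?i * (q (Yv ?i) (v ?i) + q (v ?i) (Yv ?i)) + (c ?i)^2 * q (v ?i) (v ?i)) / 2"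
        proof -
          have "q (X (Suc ?i)) (X (Suc ?i)) = q (Yv ?i) (Yv ?i) + c ?i * (q (Yv ?i) (v ?i) + q (v ?i) (Yv ?i)) + (c ?i)^2 * q (v ?i) (v ?i)"
            unfolding XS[OF i] qe by (rule refl)
          then show ?thesis by (simp only: mq)
        qed
        have e2: "momap g w (X ?i) S = (q (Yv ?i) (Yv ?i) + (- c ?i) * (q (Yv ?i) (v ?i) + q (v ?i) (Yv ?i)) + (- c ?i)^2 * q (v ?i) (v ?i)) / 2"
        proof -
          have "q (X ?i) (X ?i) = q (Yv ?i) (Yv ?i) + (- c ?i) * (q (Yv ?i) (v ?i) + q (v ?i) (Yv ?i)) + (- c ?i)^2 * q (v ?i) (v ?i)"
            unfolding XY[OF i] qe by (rule refl)
          then show ?thesis by (simp only: mq)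
        qed
        have IH: "momap g w (X ?i) S = momap g w y0 S
           - of_real h * (\<Sum>j\<in>{1..<?i}. of_real (b j) * ad_star g (A j) (momap g w (Yv j)) S)"
          using Suc.IH le by simp
        show "momap g w (X (Suc ?i)) S = momap g w y0 S
           - of_real h * (\<Sum>j\<in>{1..<Suc ?i}. of_real (b j) * ad_star g (A j) (momap g w (Yv j)) S)"
        proof -
          have sp: "{1..<Suc ?i} = insert ?i {1..<?i}" by auto
          have nm: "?i \<notin> {1..<?i}" by simp
          show ?thesis unfolding sp sum.insert[OF finite_atLeastLessThan nm]
            by (rule arith1[OF e1 e2 IH ad[of ?i]], simp add: c_def)
        qed
      qed
    qed
    show ?thesis
    proof
      show "\<forall>i\<in>{1..s}. momap g w (Yv i) S = momap g w y0 S
           - of_real h * (\<Sum>j\<in>{1..<i}. of_real (b j) * ad_star g (A j) (momap g w (Yv j)) S)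
           - of_real h / 2 * of_real (b i) * ad_star g (A i) (momap g w (Yv i)) S
           + of_real h ^ 2 / 4 * of_real (b i) ^ 2 * U_star g (A i) (momap g w (Yv i)) S"
      proof
        fix i assume i: "i \<in> {1..s}"
        then obtain n where n: "i = Suc n" "n \<le> s" by (cases i) auto
        have e2: "momap g w (X i) S = (q (Yv i) (Yv i) + (- c i) * (q (Yv i) (v i) + q (v i) (Yv i)) + (- c i)^2 * q (v i) (v i)) / 2"
        proof -
          have "q (X i) (X i) = q (Yv i) (Yv i) + (- c i) * (q (Yv i) (v i) + q (v i) (Yv i)) + (- c i)^2 * q (v i) (v i)"
            unfolding XY[OF i] qe by (rule refl)
          then show ?thesis by (simp only: mq)
        qed
        have IH: "momap g w (X i) S = momap g w y0 S
           - of_real h * (\<Sum>j\<in>{1..<i}. of_real (b j) * ad_star g (A j) (momap g w (Yv j)) S)"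
          using clm[of n] n by simp
        show "momap g w (Yv i) S = momap g w y0 S
           - of_real h * (\<Sum>j\<in>{1..<i}. of_real (b j) * ad_star g (A j) (momap g w (Yv j)) S)
           - of_real h / 2 * of_real (b i) * ad_star g (A i) (momap g w (Yv i)) S
           + of_real h ^ 2 / 4 * of_real (b i) ^ 2 * U_star g (A i) (momap g w (Yv i)) S"
          by (rule arith2[OF mq[of "Yv i"] e2 IH ad[of i] U[of i]]) (simp add: c_def)
      qed
    next
      have "{1..<Suc s} = {1..s}" by auto
      then show "momap g w y1 S = momap g w y0 S
           - of_real h * (\<Sum>i\<in>{1..s}. of_real (b i) * ad_star g (A i) (momap g w (Yv i)) S)"
        using clm[of s] ys by simp
    qed
  qed
  show ?thesis using main unfolding A_def by (auto simp: fun_eq_iff)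
qed

end
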